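(* Let $n\geq 1$ be an integer and let $a,b,x\in\mathbb{C}$. Then $$\sum_{k=0}^{n}\binom{n+k}{2k}C_k x^{2k}(b-x^2)^{n-k}=b\sum_{k=0}^{n-1}\binom{n-1}{k}M_k^{(a,b)}x^k(x^2-ax+b)^{n-1-k},$$ where $C_k$ is the $k$-th Catalan number and $M_k^{(a,b)}$ is the $(a,b)$-Motzkin number defined in the context.
   Context: Let $C_k=\frac{1}{k+1}\binom{2k}{k}$ be the Catalan numbers. For an integer $m\geq 0$ and $a,b\in\mathbb{C}$, the $(a,b)$-Motzkin number is $$M_m^{(a,b)}=\sum_{k=0}^{\lfloor m/2\rfloor}\binom{m}{2k}C_k a^{m-2k}b^k .$$ In particular $M_0^{(a,b)}=1$. *)

theory Defs
  imports Complex_Main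
begin

definition catalan :: "nat \<Rightarrow> nat" where
  "catalan k = ((2*k) choose k) div (k+1)"

definition motzkin :: "complex \<Rightarrow> complex \<Rightarrow> nat \<Rightarrow> complex" where
  "motzkin a b m = (\<Sum>k=0..m div 2. of_nat (m choose (2*k)) * of_nat (catalan k) * a^(m-2*k) * b^k)"

end

theory Submission
  imports Defs
begin


lemma L:
  fixes p v :: complex
  shows "(\<Sum>k\<le>m. of_nat (m choose k) * of_nat (k choose t) * p^(k-t) * v^(m-k)) = of_nat (m choose t) * (p+v)^(m-t)"
proof (cases "t \<le> m")
  case False
  hence "\<And>k. k \<le> m \<Longrightarrow> k choose t = 0" by simp
  moreover have "m choose t = 0" using False by simp
  ultimately show ?thesis by (simp del: binomial_eq_0_iff)
next
  case True
  let ?f = "\<lambda>k. of_nat (m choose k) * of_nat (k choose t) * p^(k-t) * v^(m-k) :: complex"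
  have "(\<Sum>k\<le>m. ?f k) = (\<Sum>k\<in>{t..m}. ?f k)"
    by (rule sum.mono_neutral_right) auto
  also have "\<dots> = (\<Sum>k\<in>{0+t..(m-t)+t}. ?f k)" using True by simp
  also have "\<dots> = (\<Sum>l\<in>{0..m-t}. ?f (l+t))" by (rule sum.shift_bounds_cl_nat_ivl)
  also have "\<dots> = (\<Sum>l\<le>m-t. of_nat (m choose t) * (of_nat ((m-t) choose l) * p^l * v^(m-t-l)))"
  proof (rule sum.cong)
    fix l assume "l \<in> {..m-t}"
    hence l: "l \<le> m - t" by simp
    have "(m choose (l+t)) * ((l+t) choose t) = (m choose t) * ((m-t) choose l)"
      using choose_mult[of t "l+t" m] l True by simp
    hence "(of_nat (m choose (l+t)) * of_nat ((l+t) choose t) :: complex) = of_nat (m choose t) * of_nat ((m-t) choose l)"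
      by (metis of_nat_mult)
    moreover have "m - (l+t) = m - t - l" by simp
    ultimately show "?f (l+t) = of_nat (m choose t) * (of_nat ((m-t) choose l) * p^l * v^(m-t-l))"
      by (simp add: algebra_simps)
  qed (auto simp: atMost_atLeast0)
  also have "\<dots> = of_nat (m choose t) * (p+v)^(m-t)"
    by (simp add: binomial_ring sum_distrib_left)
  finally show ?thesis .
qed

lemma cat_c: "(of_nat (catalan k)::complex) = of_nat ((2*k) choose k) / of_nat (k+1)"
proof -
  have e: "Suc (2*k) * ((2*k) choose k) = (Suc (2*k) choose Suc k) * Suc k"
    by (rule Suc_times_binomial_eq)
  have cop: "coprime (Suc k) (Suc (2*k))"
    by (metis add_2_eq_Suc coprime_Suc_left_nat coprime_mult_left_iff
    mult_Suc_right mult_numeral_left_semiring_numeral)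
  have "Suc k dvd Suc (2*k) * ((2*k) choose k)" unfolding e by (rule dvd_triv_right)
  hence d: "Suc k dvd ((2*k) choose k)" using cop coprime_dvd_mult_right_iff by blast
  have "catalan k * Suc k = (2*k) choose k" unfolding catalan_def using d by (metis Suc_eq_plus1 dvd_div_mult_self)
  hence "(of_nat (catalan k)::complex) * of_nat (Suc k) = of_nat ((2*k) choose k)"
    by (metis of_nat_mult)
  moreover have "(of_nat (Suc k)::complex) \<noteq> 0" by (metis of_nat_eq_0_iff nat.distinct(1))
  ultimately show ?thesis by (simp add: eq_divide_eq del: of_nat_Suc)
qed

lemma I1:
  assumes "k \<le> n" "1 \<le> n"
  shows "(of_nat ((n+k) choose (2*k)) * of_nat (catalan k) :: complex)
     = of_nat (n choose k) * of_nat ((n+k) choose (k+1)) / of_nat n"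
proof -
  obtain m where n: "n = Suc m" using assms by (cases n) auto
  have b1: "(of_nat ((n+k) choose (2*k))::complex) = fact (n+k) / (fact (2*k) * fact (n-k))"
    using binomial_fact[of "2*k" "n+k"] assms by simp
  have b2: "(of_nat ((2*k) choose k)::complex) = fact (2*k) / (fact k * fact k)"
    using binomial_fact[of "k" "2*k"] by simp
  have b3: "(of_nat (n choose k)::complex) = fact n / (fact k * fact (n-k))"
    using binomial_fact[of "k" "n"] assms by simp
  have b4: "(of_nat ((n+k) choose (k+1))::complex) = fact (n+k) / (fact (k+1) * fact m)"
    using binomial_fact[of "k+1" "n+k"] n by simp
  have f1: "(fact n :: complex) = of_nat n * fact m" using n by simp
  have f2: "(fact (k+1) :: complex) = of_nat (k+1) * fact k" by simp
  show ?thesis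
    unfolding cat_c b1 b2 b3 b4 f1 f2 using n
    by (simp add: field_simps del: of_nat_Suc)
qed

lemma I3:
  assumes "2*j \<le> m"
  shows "(of_nat (m choose (2*j)) * of_nat (catalan j) :: complex)
     = of_nat (m choose j) * of_nat ((m-j) choose j) / of_nat (j+1)"
proof -
  have b1: "(of_nat (m choose (2*j))::complex) = fact m / (fact (2*j) * fact (m-2*j))"
    using binomial_fact[of "2*j" "m"] assms by simp
  have b2: "(of_nat ((2*j) choose j)::complex) = fact (2*j) / (fact j * fact j)"
    using binomial_fact[of "j" "2*j"] by simp
  have b3: "(of_nat (m choose j)::complex) = fact m / (fact j * fact (m-j))"
    using binomial_fact[of "j" "m"] assms by simp
  have b4: "(of_nat ((m-j) choose j)::complex) = fact (m-j) / (fact j * fact (m-2*j))"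
  proof -
    have "j \<le> m - j" "m - j - j = m - 2*j" using assms by auto
    thus ?thesis using binomial_fact[of "j" "m-j"] by simp
  qed
  show ?thesis
    unfolding cat_c b1 b2 b3 b4
    by (simp add: field_simps del: of_nat_Suc)
qed

lemma I2:
  assumes "1 \<le> n"
  shows "(n+k) choose (k+1) = (\<Sum>t\<le>n-1. (k choose t) * (n choose (t+1)))"
proof -
  have "(\<Sum>t\<le>n-1. (k choose t) * (n choose (n-1-t))) = (k+n) choose (n-1)"
    by (rule vandermonde)
  moreover have "(\<Sum>t\<le>n-1. (k choose t) * (n choose (n-1-t))) = (\<Sum>t\<le>n-1. (k choose t) * (n choose (t+1)))"
  proof (rule sum.cong)
    fix t assume "t \<in> {..n-1}"
    hence "t+1 \<le> n" "n - (t+1) = n-1-t" using assms by auto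
    thus "(k choose t) * (n choose (n-1-t)) = (k choose t) * (n choose (t+1))"
      using binomial_symmetric[of "t+1" n] by simp
  qed simp
  moreover have "(k+n) choose (n-1) = (n+k) choose (k+1)"
  proof -
    have "n - 1 \<le> k+n" "k + n - (n-1) = k+1" using assms by auto
    thus ?thesis using binomial_symmetric[of "n-1" "k+n"] by (simp add: add.commute)
  qed
  ultimately show ?thesis by simp
qed

lemma CM:
  assumes "s + l \<le> M"
  shows "(M choose s) * ((M-s) choose l) = (M choose l) * ((M-l) choose s)"
proof -
  have "(M choose (s+l)) * ((s+l) choose s) = (M choose s) * ((M-s) choose l)"
    using choose_mult[of s "s+l" M] assms by simp
  moreover have "(M choose (s+l)) * ((s+l) choose l) = (M choose l) * ((M-l) choose s)"
    using choose_mult[of l "s+l" M] assms by simp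
  moreover have "(s+l) choose s = (s+l) choose l"
    using binomial_symmetric[of s "s+l"] by simp
  ultimately show ?thesis by simp
qed

lemma I4:
  assumes "i \<le> m"
  shows "(\<Sum>j\<le>m. of_nat ((i choose j) * ((m-i) choose j)) / of_nat (j+1) :: complex)
       = of_nat ((m+1) choose (i+1)) / of_nat (m+1-i)"
proof -
  let ?f = "\<lambda>j. of_nat ((i choose j) * ((m-i) choose j)) / of_nat (j+1) :: complex"
  have nz: "(of_nat (Suc (m-i)) :: complex) \<noteq> 0" by (metis of_nat_eq_0_iff nat.distinct(1))
  have "(\<Sum>j\<le>m. ?f j) = (\<Sum>j\<le>m-i. ?f j)"
    by (rule sum.mono_neutral_right) auto
  also have "\<dots> = (\<Sum>j\<le>m-i. of_nat ((i choose j) * (Suc (m-i) choose Suc j)) / of_nat (Suc (m-i)))"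
  proof (rule sum.cong)
    fix j
    have e: "Suc (m-i) * ((m-i) choose j) = (Suc (m-i) choose Suc j) * Suc j"
      by (rule Suc_times_binomial_eq)
    hence "(of_nat (Suc (m-i)) * of_nat ((m-i) choose j) :: complex) = of_nat (Suc (m-i) choose Suc j) * of_nat (Suc j)"
      by (metis of_nat_mult)
    moreover have "(of_nat (Suc j) :: complex) \<noteq> 0" by (metis of_nat_eq_0_iff nat.distinct(1))
    ultimately show "?f j = of_nat ((i choose j) * (Suc (m-i) choose Suc j)) / of_nat (Suc (m-i))"
      using nz by (simp add: field_simps del: of_nat_Suc)
  qed simp
  also have "\<dots> = of_nat (\<Sum>j\<le>m-i. (i choose j) * (Suc (m-i) choose Suc j)) / of_nat (Suc (m-i))"
    by (simp add: sum_divide_distrib)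
  also have "(\<Sum>j\<le>m-i. (i choose j) * (Suc (m-i) choose Suc j)) = (\<Sum>j\<le>m-i. (i choose j) * (Suc (m-i) choose (m-i-j)))"
  proof (rule sum.cong)
    fix j assume "j \<in> {..m-i}"
    hence "Suc j \<le> Suc (m-i)" "Suc (m-i) - Suc j = m-i-j" by auto
    thus "(i choose j) * (Suc (m-i) choose Suc j) = (i choose j) * (Suc (m-i) choose (m-i-j))"
      using binomial_symmetric[of "Suc j" "Suc (m-i)"] by simp
  qed simp
  also have "\<dots> = (i + Suc (m-i)) choose (m-i)" by (rule vandermonde)
  also have "\<dots> = (m+1) choose (i+1)"
  proof -
    have "i + Suc (m-i) = m+1" "m - i \<le> m+1" "m+1-(m-i) = i+1" using assms by auto
    thus ?thesis using binomial_symmetric[of "m-i" "m+1"] by simp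
  qed
  finally show ?thesis using assms by (simp add: Suc_diff_le)
qed

lemma aux5: "(d::complex) \<noteq> 0 \<Longrightarrow> e \<noteq> 0 \<Longrightarrow> e*A = d*B \<Longrightarrow> A*X/d = B*X/e"
  by (simp add: field_simps)

lemma I5:
  assumes "i \<le> m"
  shows "(of_nat (m choose i) * of_nat ((m+1) choose (i+1)) / of_nat (m+1-i) :: complex)
       = of_nat (((m+1) choose i) * ((m+1) choose (i+1))) / of_nat (m+1)"
proof -
  have "m+1-i = Suc (m-i)" using assms by simp
  moreover have "(of_nat (Suc (m-i)) :: complex) \<noteq> 0" by (metis of_nat_eq_0_iff nat.distinct(1))
  ultimately have nz: "(of_nat (m+1-i) :: complex) \<noteq> 0" by simp
  have nz2: "(of_nat (m+1) :: complex) \<noteq> 0" by (metis of_nat_eq_0_iff add_is_0 one_neq_zero)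
  have "(m+1-i) * ((m+1) choose i) = (m+1) * (m choose i)"
    using binomial_absorb_comp[of "m+1" i] by simp
  hence "(of_nat (m+1) * of_nat (m choose i) :: complex) = of_nat (m+1-i) * of_nat ((m+1) choose i)"
    by (metis of_nat_mult)
  thus ?thesis unfolding of_nat_mult by (rule aux5[OF nz nz2])
qed


lemma L3:
  fixes p q :: complex
  shows "(\<Sum>i\<le>m. of_nat ((m choose i) * (i choose j) * ((m-i) choose j)) * p^i * q^(m-i))
       = of_nat ((m choose j) * ((m-j) choose j)) * (p*q)^j * (p+q)^(m-2*j)"
proof (cases "2*j \<le> m")
  case False
  have z: "\<And>i. i \<le> m \<Longrightarrow> (i choose j) * ((m-i) choose j) = 0" using False by auto
  have "(\<Sum>i\<le>m. of_nat ((m choose i) * (i choose j) * ((m-i) choose j)) * p^i * q^(m-i)) = (0::complex)"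
  proof (rule sum.neutral, rule ballI)
    fix i assume "i \<in> {..m}"
    hence "(m choose i) * (i choose j) * ((m-i) choose j) = 0" using z[of i] by (simp add: mult.assoc)
    thus "of_nat ((m choose i) * (i choose j) * ((m-i) choose j)) * p^i * q^(m-i) = (0::complex)" by (simp only: of_nat_0 mult_zero_left)
  qed
  moreover have "(m-j) choose j = 0" using False by auto
  ultimately show ?thesis by simp
next
  case True
  let ?f = "\<lambda>i. of_nat ((m choose i) * (i choose j) * ((m-i) choose j)) * p^i * q^(m-i)"
  have seteq: "{j..m-j} = {0+j..(m-2*j)+j}" using True by auto
  have "(\<Sum>i\<le>m. ?f i) = (\<Sum>i\<in>{j..m-j}. ?f i)"
    by (rule sum.mono_neutral_right) auto
  also have "\<dots> = (\<Sum>i\<in>{0+j..(m-2*j)+j}. ?f i)" by (simp only: seteq)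
  also have "\<dots> = (\<Sum>s\<in>{0..m-2*j}. ?f (s+j))" by (rule sum.shift_bounds_cl_nat_ivl)
  also have "\<dots> = (\<Sum>s\<le>m-2*j. of_nat ((m choose j) * ((m-j) choose j)) * (p*q)^j * (of_nat ((m-2*j) choose s) * p^s * q^(m-2*j-s)))"
  proof (rule sum.cong)
    fix s assume "s \<in> {..m-2*j}"
    hence s: "s \<le> m - 2*j" by simp
    have "(m choose (s+j)) * ((s+j) choose j) = (m choose j) * ((m-j) choose s)"
      using choose_mult[of j "s+j" m] s True by simp
    moreover have "((m-j) choose s) * ((m-j-s) choose j) = ((m-j) choose j) * ((m-j-j) choose s)"
    proof -
      have "s + j \<le> m - j" using s True by linarith
      thus ?thesis using CM[of s j "m-j"] by simp
    qed
    moreover have "m - (s+j) = m-j-s" "m-j-j = m-2*j" by auto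
    ultimately have "(m choose (s+j)) * ((s+j) choose j) * ((m-(s+j)) choose j) = (m choose j) * ((m-j) choose j) * ((m-2*j) choose s)"
      by (metis mult.assoc mult.commute)
    hence c: "(of_nat ((m choose (s+j)) * ((s+j) choose j) * ((m-(s+j)) choose j)) :: complex) = of_nat ((m choose j) * ((m-j) choose j) * ((m-2*j) choose s))"
      by simp
    have "m - (s+j) = j + (m-2*j-s)" using s True by auto
    hence pw: "p^(s+j) * q^(m-(s+j)) = (p*q)^j * (p^s * q^(m-2*j-s))"
      by (simp only: power_add power_mult_distrib) (simp only: ac_simps)
    show "?f (s+j) = of_nat ((m choose j) * ((m-j) choose j)) * (p*q)^j * (of_nat ((m-2*j) choose s) * p^s * q^(m-2*j-s))"
      using c pw by (simp only: of_nat_mult mult.assoc) (simp add: algebra_simps)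
  qed (auto simp: atMost_atLeast0)
  also have "\<dots> = of_nat ((m choose j) * ((m-j) choose j)) * (p*q)^j * (p+q)^(m-2*j)"
    by (simp add: binomial_ring sum_distrib_left)
  finally show ?thesis .
qed


lemma partA:
  fixes b u :: complex and m :: nat
  defines "n \<equiv> Suc m"
  shows "(\<Sum>k\<le>n. of_nat ((n+k) choose (2*k)) * of_nat (catalan k) * u^k * (b - u)^(n-k))
     = (\<Sum>t\<le>m. of_nat ((n choose t) * (n choose (t+1))) / of_nat n * u^t * b^(n-t))"
proof -
  have n1: "1 \<le> n" "n - 1 = m" unfolding n_def by auto
  have "(\<Sum>k\<le>n. of_nat ((n+k) choose (2*k)) * of_nat (catalan k) * u^k * (b - u)^(n-k))
      = (\<Sum>k\<le>n. \<Sum>t\<le>m. of_nat (n choose (t+1)) / of_nat n * u^t *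
            (of_nat (n choose k) * of_nat (k choose t) * u^(k-t) * (b-u)^(n-k)))"
  proof (rule sum.cong[OF refl])
    fix k assume "k \<in> {..n}"
    hence k: "k \<le> n" by simp
    have "of_nat ((n+k) choose (2*k)) * of_nat (catalan k) * u^k * (b - u)^(n-k)
       = of_nat (n choose k) * of_nat ((n+k) choose (k+1)) / of_nat n * u^k * (b - u)^(n-k)"
      using I1[OF k n1(1)] by simp
    also have "\<dots> = (\<Sum>t\<le>m. of_nat (n choose k) * of_nat ((k choose t) * (n choose (t+1))) / of_nat n * u^k * (b - u)^(n-k))"
      unfolding I2[OF n1(1), of k] n1(2) of_nat_sum
      by (simp add: sum_distrib_left sum_distrib_right sum_divide_distrib)
    also have "\<dots> = (\<Sum>t\<le>m. of_nat (n choose (t+1)) / of_nat n * u^t *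
            (of_nat (n choose k) * of_nat (k choose t) * u^(k-t) * (b-u)^(n-k)))"
    proof (rule sum.cong[OF refl])
      fix t
      show "of_nat (n choose k) * of_nat ((k choose t) * (n choose (t+1))) / of_nat n * u^k * (b - u)^(n-k)
          = of_nat (n choose (t+1)) / of_nat n * u^t *
            (of_nat (n choose k) * of_nat (k choose t) * u^(k-t) * (b-u)^(n-k))"
      proof (cases "t \<le> k")
        case True
        hence "u^k = u^t * u^(k-t)" by (metis le_add_diff_inverse power_add)
        thus ?thesis by (simp add: algebra_simps)
      next
        case False
        thus ?thesis by simp
      qed
    qed
    finally show "of_nat ((n+k) choose (2*k)) * of_nat (catalan k) * u^k * (b - u)^(n-k)
       = (\<Sum>t\<le>m. of_nat (n choose (t+1)) / of_nat n * u^t *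
            (of_nat (n choose k) * of_nat (k choose t) * u^(k-t) * (b-u)^(n-k)))" .
  qed
  also have "\<dots> = (\<Sum>t\<le>m. of_nat (n choose (t+1)) / of_nat n * u^t *
            (\<Sum>k\<le>n. of_nat (n choose k) * of_nat (k choose t) * u^(k-t) * (b-u)^(n-k)))"
    by (simp add: sum.swap[of _ "{..n}"] sum_distrib_left)
  also have "\<dots> = (\<Sum>t\<le>m. of_nat ((n choose t) * (n choose (t+1))) / of_nat n * u^t * b^(n-t))"
    unfolding L by (simp add: algebra_simps)
  finally show ?thesis .
qed


lemma B1:
  fixes a b x :: complex
  assumes "k \<le> m"
  shows "motzkin a b k * x^k = (\<Sum>j\<le>m. of_nat (catalan j) * (b*x^2)^j * (of_nat (k choose (2*j)) * (a*x)^(k-2*j)))"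
proof -
  have "motzkin a b k * x^k = (\<Sum>j\<in>{0..k div 2}. of_nat (k choose (2*j)) * of_nat (catalan j) * a^(k-2*j) * b^j * x^k)"
    unfolding motzkin_def by (simp add: sum_distrib_right)
  also have "\<dots> = (\<Sum>j\<in>{0..k div 2}. of_nat (catalan j) * (b*x^2)^j * (of_nat (k choose (2*j)) * (a*x)^(k-2*j)))"
  proof (rule sum.cong[OF refl])
    fix j assume "j \<in> {0..k div 2}"
    hence "2*j \<le> k" by auto
    hence "x^k = (x^2)^j * x^(k-2*j)" by (metis le_add_diff_inverse power_add power_mult)
    thus "of_nat (k choose (2*j)) * of_nat (catalan j) * a^(k-2*j) * b^j * x^k = of_nat (catalan j) * (b*x^2)^j * (of_nat (k choose (2*j)) * (a*x)^(k-2*j))"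
      by (simp add: power_mult_distrib algebra_simps)
  qed
  also have "\<dots> = (\<Sum>j\<le>m. of_nat (catalan j) * (b*x^2)^j * (of_nat (k choose (2*j)) * (a*x)^(k-2*j)))"
  proof (rule sum.mono_neutral_left)
    show "{0..k div 2} \<subseteq> {..m}" using assms by auto
  next
    show "\<forall>i\<in>{..m} - {0..k div 2}. of_nat (catalan i) * (b*x^2)^i * (of_nat (k choose (2*i)) * (a*x)^(k-2*i)) = 0"
      by auto
  qed auto
  finally show ?thesis .
qed

lemma partB:
  fixes a b x :: complex and m :: nat
  defines "n \<equiv> Suc m"
  shows "b * (\<Sum>k=0..m. of_nat (m choose k) * motzkin a b k * x^k * (x^2 - a*x + b)^(m-k))
     = (\<Sum>t\<le>m. of_nat ((n choose t) * (n choose (t+1))) / of_nat n * (x^2)^t * b^(n-t))"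
proof -
  let ?u = "x^2" and ?y = "x^2 - a*x + b"
  have "(\<Sum>k=0..m. of_nat (m choose k) * motzkin a b k * x^k * ?y^(m-k))
      = (\<Sum>k\<le>m. \<Sum>j\<le>m. of_nat (catalan j) * (b*?u)^j * (of_nat (m choose k) * of_nat (k choose (2*j)) * (a*x)^(k-2*j) * ?y^(m-k)))"
  proof (unfold atLeast0AtMost, rule sum.cong[OF refl])
    fix k assume "k \<in> {..m}"
    hence k: "k \<le> m" by simp
    show "of_nat (m choose k) * motzkin a b k * x^k * ?y^(m-k) = (\<Sum>j\<le>m. of_nat (catalan j) * (b*?u)^j * (of_nat (m choose k) * of_nat (k choose (2*j)) * (a*x)^(k-2*j) * ?y^(m-k)))"
      using B1[OF k, of a b x] 
      by (simp add: mult.assoc sum_distrib_left sum_distrib_right) (simp add: algebra_simps)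
  qed
  also have "\<dots> = (\<Sum>j\<le>m. \<Sum>k\<le>m. of_nat (catalan j) * (b*?u)^j * (of_nat (m choose k) * of_nat (k choose (2*j)) * (a*x)^(k-2*j) * ?y^(m-k)))"
    by (rule sum.swap)
  also have "\<dots> = (\<Sum>j\<le>m. of_nat (catalan j) * (b*?u)^j * (\<Sum>k\<le>m. of_nat (m choose k) * of_nat (k choose (2*j)) * (a*x)^(k-2*j) * ?y^(m-k)))"
    by (simp only: sum_distrib_left)
  also have "\<dots> = (\<Sum>j\<le>m. of_nat (catalan j) * (b*?u)^j * (of_nat (m choose (2*j)) * (?u+b)^(m-2*j)))"
  proof -
    have "a*x + ?y = ?u + b" by simp
    thus ?thesis unfolding L by simp
  qed
  also have "\<dots> = (\<Sum>j\<le>m. 1 / of_nat (j+1) * (of_nat ((m choose j) * ((m-j) choose j)) * (?u*b)^j * (?u+b)^(m-2*j)))"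
  proof (rule sum.cong[OF refl])
    fix j
    show "of_nat (catalan j) * (b*?u)^j * (of_nat (m choose (2*j)) * (?u+b)^(m-2*j)) = 1 / of_nat (j+1) * (of_nat ((m choose j) * ((m-j) choose j)) * (?u*b)^j * (?u+b)^(m-2*j))"
    proof (cases "2*j \<le> m")
      case True
      have "of_nat (catalan j) * (b*?u)^j * (of_nat (m choose (2*j)) * (?u+b)^(m-2*j)) = (of_nat (m choose (2*j)) * of_nat (catalan j)) * ((b*?u)^j * (?u+b)^(m-2*j))"
        by (simp only: mult_ac)
      also have "\<dots> = of_nat (m choose j) * of_nat ((m-j) choose j) / of_nat (j+1) * ((b*?u)^j * (?u+b)^(m-2*j))"
        by (simp only: I3[OF True])
      also have "\<dots> = 1 / of_nat (j+1) * (of_nat ((m choose j) * ((m-j) choose j)) * (?u*b)^j * (?u+b)^(m-2*j))"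
        by (simp only: divide_inverse mult_ac of_nat_mult mult_1_left)
      finally show ?thesis .
    next
      case False
      hence "m choose (2*j) = 0" "(m-j) choose j = 0" by auto
      thus ?thesis by (simp del: binomial_eq_0_iff)
    qed
  qed
  also have "\<dots> = (\<Sum>j\<le>m. 1 / of_nat (j+1) * (\<Sum>i\<le>m. of_nat ((m choose i) * (i choose j) * ((m-i) choose j)) * ?u^i * b^(m-i)))"
    unfolding L3 ..
  also have "\<dots> = (\<Sum>i\<le>m. of_nat (m choose i) * ?u^i * b^(m-i) * (\<Sum>j\<le>m. of_nat ((i choose j) * ((m-i) choose j)) / of_nat (j+1)))"
    apply (simp only: sum_distrib_left)
    apply (subst sum.swap)
    apply (rule sum.cong[OF refl])
    apply (rule sum.cong[OF refl])
    apply (simp add: algebra_simps)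
    done
  also have "\<dots> = (\<Sum>i\<le>m. of_nat ((n choose i) * (n choose (i+1))) / of_nat n * ?u^i * b^(m-i))"
  proof (rule sum.cong[OF refl])
    fix i assume "i \<in> {..m}"
    hence i: "i \<le> m" by simp
    show "of_nat (m choose i) * ?u^i * b^(m-i) * (\<Sum>j\<le>m. of_nat ((i choose j) * ((m-i) choose j)) / of_nat (j+1)) = of_nat ((n choose i) * (n choose (i+1))) / of_nat n * ?u^i * b^(m-i)"
    proof -
      have "of_nat (m choose i) * ?u^i * b^(m-i) * (\<Sum>j\<le>m. of_nat ((i choose j) * ((m-i) choose j)) / of_nat (j+1))
          = (of_nat (m choose i) * of_nat ((m+1) choose (i+1)) / of_nat (m+1-i)) * (?u^i * b^(m-i))"
        unfolding I4[OF i] by (simp only: mult_ac divide_inverse)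
      also have "\<dots> = of_nat (((m+1) choose i) * ((m+1) choose (i+1))) / of_nat (m+1) * (?u^i * b^(m-i))"
        by (simp only: I5[OF i])
      also have "\<dots> = of_nat ((n choose i) * (n choose (i+1))) / of_nat n * ?u^i * b^(m-i)"
        by (simp only: mult_ac n_def Suc_eq_plus1)
      finally show ?thesis .
    qed
  qed
  finally have e: "(\<Sum>k=0..m. of_nat (m choose k) * motzkin a b k * x^k * ?y^(m-k)) = (\<Sum>i\<le>m. of_nat ((n choose i) * (n choose (i+1))) / of_nat n * ?u^i * b^(m-i))" .
  show ?thesis unfolding e sum_distrib_left
  proof (rule sum.cong[OF refl])
    fix i assume "i \<in> {..m}"
    hence "n - i = Suc (m-i)" unfolding n_def by auto
    thus "b * (of_nat ((n choose i) * (n choose (i+1))) / of_nat n * ?u^i * b^(m-i)) = of_nat ((n choose i) * (n choose (i+1))) / of_nat n * ?u^i * b^(n-i)"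
      by (simp add: algebra_simps)
  qed
qed

theorem theorem1p2:
  fixes n :: nat and a b x :: complex
  assumes "n \<ge> 1"
  shows "(\<Sum>k=0..n. of_nat ((n+k) choose (2*k)) * of_nat (catalan k) * x^(2*k) * (b - x^2)^(n-k))
       = b * (\<Sum>k=0..n-1. of_nat ((n-1) choose k) * motzkin a b k * x^k * (x^2 - a*x + b)^(n-1-k))"
proof -
  obtain m where n: "n = Suc m" using assms by (cases n) auto
  have nm: "n - 1 = m" using n by simp
  have "(\<Sum>k=0..n. of_nat ((n+k) choose (2*k)) * of_nat (catalan k) * x^(2*k) * (b - x^2)^(n-k))
      = (\<Sum>k\<le>n. of_nat ((n+k) choose (2*k)) * of_nat (catalan k) * (x^2)^k * (b - x^2)^(n-k))"
    unfolding atLeast0AtMost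
    by (intro sum.cong refl) (simp add: power_mult)
  also have "\<dots> = (\<Sum>t\<le>m. of_nat ((n choose t) * (n choose (t+1))) / of_nat n * (x^2)^t * b^(n-t))"
    unfolding n by (rule partA)
  also have "\<dots> = b * (\<Sum>k=0..m. of_nat (m choose k) * motzkin a b k * x^k * (x^2 - a*x + b)^(m-k))"
    unfolding n by (rule partB[symmetric])
  finally show ?thesis unfolding nm .
qed

end
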